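(* For parameters $b>0$, $\sigma>0$, $r\ge0$, $q\ge0$ with $r\neq q$, loan principal $K\ge b$, maturity $T>t\ge0$ and house price $S\ge b$, write $\tau=T-t$, $\theta=\frac{2(r-q)}{\sigma^2}$, $z_1=\frac{\ln(S/K)+(r-q+\frac12\sigma^2)\tau}{\sigma\sqrt\tau}$, $z_2=\frac{\ln(b^2/(KS))+(r-q+\frac12\sigma^2)\tau}{\sigma\sqrt\tau}$, $z_3=\frac{\ln(S/b)+(r-q+\frac12\sigma^2)\tau}{\sigma\sqrt\tau}$, $z_4=\frac{\ln(b/S)+(r-q+\frac12\sigma^2)\tau}{\sigma\sqrt\tau}$, and define $$\begin{aligned}P(t,S)={}&Ke^{-r\tau}\Phi(-z_1+\sigma\sqrt\tau)-Se^{-q\tau}\Phi(-z_1)-be^{-r\tau}\Phi(-z_3+\sigma\sqrt\tau)+Se^{-q\tau}\Phi(-z_3)\\&+\frac1\theta\Bigl(be^{-r\tau}\Phi(-z_3+\sigma\sqrt\tau)-Se^{-q\tau}\bigl(\tfrac bS\bigr)^{1+\theta}\bigl(\Phi(z_4)-\Phi(z_2)\bigr)-Ke^{-r\tau}\bigl(\tfrac Kb\bigr)^{\theta-1}\Phi(z_2-\theta\sigma\sqrt\tau)\Bigr),\end{aligned}$$ where $\Phi$ is the standard normal distribution function. Suppose $r=0$ and $0<q<\frac12\sigma^2$. Then for every fixed $t\ge0$ and $S\ge b$ there exists $T'>t$ such that for all $T>T'$, $P(t,S)<Ke^{-r(T-t)}-Se^{-q(T-t)}$ (i.e. $P(t,S)<K-Se^{-q(T-t)}$),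 violating the lower bound $P(t,S)\ge Ke^{-r(T-t)}-Se^{-q(T-t)}$.
   Context: $P$ is the published pricing formula for a no-negative-equity guarantee (a European put on a house price modelled as a reflected geometric Brownian motion with lower reflecting boundary $b$, volatility $\sigma$, risk-free rate $r$ and deferment rate $q$ playing the role of a dividend yield). Under any equivalent risk-neutral measure the price must satisfy $P(t,S)\ge Ke^{-r(T-t)}-Se^{-q(T-t)}$. *)

theory Defs
  imports "HOL-Probability.Probability"
begin

definition Phi :: "real \<Rightarrow> real" where
  "Phi = cdf (density lborel std_normal_density)"

definition nneg_price ::
  "real \<Rightarrow> real \<Rightarrow> real \<Rightarrow> real \<Rightarrow> real \<Rightarrow> real \<Rightarrow> real \<Rightarrow> real \<Rightarrow> real" where
  "nneg_price b \<sigma> r q K T t S =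
    (let \<tau> = T - t;
         \<theta> = 2 * (r - q) / \<sigma>\<^sup>2;
         s = \<sigma> * sqrt \<tau>;
         m = (r - q + \<sigma>\<^sup>2 / 2) * \<tau>;
         z1 = (ln (S / K) + m) / s;
         z2 = (ln (b\<^sup>2 / (K * S)) + m) / s;
         z3 = (ln (S / b) + m) / s;
         z4 = (ln (b / S) + m) / s
     in K * exp (- r * \<tau>) * Phi (- z1 + s) - S * exp (- q * \<tau>) * Phi (- z1)
        - b * exp (- r * \<tau>) * Phi (- z3 + s) + S * exp (- q * \<tau>) * Phi (- z3)
        + (1 / \<theta>) * (b * exp (- r * \<tau>) * Phi (- z3 + s)
            - S * exp (- q * \<tau>) * (b / S) powr (1 + \<theta>) * (Phi z4 - Phi z2)
            - K * exp (- r * \<tau>) * (K / b) powr (\<theta> - 1) * Phi (z2 - \<theta> * s)))"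

end

theory Submission
  imports Defs "HOL-Probability.Characteristic_Functions"
begin

lemma Phi_dist: "real_distribution (density lborel std_normal_density)"
  using real_dist_normal_dist by simp

lemma Phi_ge0: "0 \<le> Phi x"
  unfolding Phi_def using finite_borel_measure.cdf_nonneg[OF real_distribution.finite_borel_measure_M[OF Phi_dist]] by blast

lemma Phi_le1: "Phi x \<le> 1"
  unfolding Phi_def using real_distribution.cdf_bounded_prob[OF Phi_dist] by blast

lemma Phi_top: "(Phi \<longlongrightarrow> 1) at_top"
  unfolding Phi_def using real_distribution.cdf_lim_at_top_prob[OF Phi_dist] .

lemma lin_top:
  fixes \<sigma> c a :: real
  assumes "\<sigma> > 0" "c > 0"
  shows "filterlim (\<lambda>x. (a + c*x)/(\<sigma>* sqrt x)) at_top at_top"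
proof -
  have e: "eventually (\<lambda>x. (a/\<sigma>) * (1 / sqrt x) + (c/\<sigma>) * sqrt x = (a + c*x)/(\<sigma>* sqrt x)) at_top"
    using eventually_gt_at_top[of 0]
  proof eventually_elim
    case (elim x)
    have "sqrt x * sqrt x = x" using elim by simp
    then show ?case using elim assms by (simp add: field_simps)
  qed
  have t0: "((\<lambda>x::real. 1 / sqrt x) \<longlongrightarrow> 0) at_top" by real_asymp
  have "filterlim (\<lambda>x. (a/\<sigma>) * (1 / sqrt x) + (c/\<sigma>) * sqrt x) at_top at_top"
    apply (rule filterlim_tendsto_add_at_top[OF tendsto_mult_right_zero[OF t0]])
    apply (rule filterlim_tendsto_pos_mult_at_top[OF tendsto_const])
    using assms sqrt_at_top by auto
  then show ?thesis using filterlim_cong[OF refl refl e] by simp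
qed

lemma Phi_lin:
  fixes \<sigma> c a :: real
  assumes "\<sigma> > 0" "c > 0"
  shows "((\<lambda>x. Phi ((a + c*x)/(\<sigma>* sqrt x))) \<longlongrightarrow> 1) at_top"
  using filterlim_compose[OF Phi_top lin_top[OF assms]] .

lemma PhiA:
  fixes \<sigma> c a :: real
  assumes "\<sigma> > 0" "c < \<sigma>\<^sup>2"
  shows "((\<lambda>x. Phi (- ((a + c*x)/(\<sigma>* sqrt x)) + \<sigma>* sqrt x)) \<longlongrightarrow> 1) at_top"
proof -
  have e: "eventually (\<lambda>x. Phi (((-a) + (\<sigma>\<^sup>2 - c)*x)/(\<sigma>* sqrt x)) = Phi (- ((a + c*x)/(\<sigma>* sqrt x)) + \<sigma>* sqrt x)) at_top"
    using eventually_gt_at_top[of 0]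
  proof eventually_elim
    case (elim x)
    have "sqrt x * sqrt x = x" using elim by simp
    then have "((-a) + (\<sigma>\<^sup>2 - c)*x)/(\<sigma>* sqrt x) = - ((a + c*x)/(\<sigma>* sqrt x)) + \<sigma>* sqrt x"
      using elim assms by (simp add: field_simps power2_eq_square)
    then show ?case by simp
  qed
  show ?thesis using tendsto_cong[OF e] Phi_lin[OF assms(1), of "\<sigma>\<^sup>2 - c" "-a"] assms by simp
qed

lemma PhiB:
  fixes \<sigma> c a d :: real
  assumes "\<sigma> > 0" "c - d * \<sigma>\<^sup>2 > 0"
  shows "((\<lambda>x. Phi ((a + c*x)/(\<sigma>* sqrt x) - d * (\<sigma>* sqrt x))) \<longlongrightarrow> 1) at_top"
proof -
  have e: "eventually (\<lambda>x. Phi ((a + (c - d * \<sigma>\<^sup>2)*x)/(\<sigma>* sqrt x)) = Phi ((a + c*x)/(\<sigma>* sqrt x) - d * (\<sigma>* sqrt x))) at_top"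
    using eventually_gt_at_top[of 0]
  proof eventually_elim
    case (elim x)
    have "sqrt x * sqrt x = x" using elim by simp
    then have "(a + (c - d * \<sigma>\<^sup>2)*x)/(\<sigma>* sqrt x) = (a + c*x)/(\<sigma>* sqrt x) - d * (\<sigma>* sqrt x)"
      using elim assms by (simp add: field_simps power2_eq_square)
    then show ?case by simp
  qed
  show ?thesis using tendsto_cong[OF e] Phi_lin[OF assms(1) assms(2), of a] by simp
qed

lemma zero_bounded:
  fixes f g :: "real \<Rightarrow> real"
  assumes "(f \<longlongrightarrow> 0) F" "\<And>x. \<bar>g x\<bar> \<le> B"
  shows "((\<lambda>x. f x * g x) \<longlongrightarrow> 0) F"
proof (rule Lim_null_comparison)
  show "eventually (\<lambda>x. norm (f x * g x) \<le> \<bar>f x\<bar> * B) F"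
    using assms(2) by (auto simp: abs_mult intro!: always_eventually mult_left_mono)
  show "((\<lambda>x. \<bar>f x\<bar> * B) \<longlongrightarrow> 0) F"
    using tendsto_mult_left_zero[OF tendsto_rabs_zero[OF assms(1)]] .
qed

lemma exp_zero:
  fixes q S :: real
  assumes "q > 0"
  shows "((\<lambda>x. S * exp (- q * x)) \<longlongrightarrow> 0) at_top"
  using assms by real_asymp

theorem proposition3p5:
  fixes b \<sigma> r q K t S :: real
  assumes "b > 0" and "\<sigma> > 0" and "r = 0" and "0 < q" and "q < \<sigma>\<^sup>2 / 2"
    and "K \<ge> b" and "t \<ge> 0" and "S \<ge> b"
  shows "\<exists>T'>t. \<forall>T>T'. nneg_price b \<sigma> r q K T t S
            < K * exp (- r * (T - t)) - S * exp (- q * (T - t))"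
proof -
  define \<theta> where "\<theta> = 2 * (0 - q) / \<sigma>\<^sup>2"
  define c where "c = 0 - q + \<sigma>\<^sup>2 / 2"
  define C where "C = (K / b) powr (\<theta> - 1)"
  define D where "D = (b / S) powr (1 + \<theta>)"
  have cpos: "c > 0" using assms unfolding c_def by simp
  have s2: "\<sigma>\<^sup>2 > 0" using assms by simp
  have thneg: "\<theta> < 0" unfolding \<theta>_def using assms s2 by (simp add: divide_neg_pos)
  have th2: "\<theta> * \<sigma>\<^sup>2 = -2*q" unfolding \<theta>_def using s2 by simp
  let ?z1 = "\<lambda>x. (ln (S / K) + c * x) / (\<sigma> * sqrt x)"
  let ?z2 = "\<lambda>x. (ln (b\<^sup>2 / (K * S)) + c * x) / (\<sigma> * sqrt x)"
  let ?z3 = "\<lambda>x. (ln (S / b) + c * x) / (\<sigma> * sqrt x)"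
  let ?z4 = "\<lambda>x. (ln (b / S) + c * x) / (\<sigma> * sqrt x)"
  let ?s = "\<lambda>x. \<sigma> * sqrt x"
  have cs: "c < \<sigma>\<^sup>2" using assms unfolding c_def by simp
  have l1: "((\<lambda>x. Phi (- ?z1 x + ?s x)) \<longlongrightarrow> 1) at_top" by (rule PhiA[OF assms(2) cs])
  have l3: "((\<lambda>x. Phi (- ?z3 x + ?s x)) \<longlongrightarrow> 1) at_top" by (rule PhiA[OF assms(2) cs])
  have l5: "((\<lambda>x. Phi (?z2 x - \<theta> * ?s x)) \<longlongrightarrow> 1) at_top"
    by (rule PhiB[OF assms(2)]) (use th2 cpos assms in simp)
  have q1: "((\<lambda>x. S * exp (- q * x) * Phi (- ?z1 x)) \<longlongrightarrow> 0) at_top"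
    by (rule zero_bounded[OF exp_zero[OF assms(4)], where B=1]) (use Phi_ge0 Phi_le1 in auto)
  have q3: "((\<lambda>x. S * exp (- q * x) * Phi (- ?z3 x)) \<longlongrightarrow> 0) at_top"
    by (rule zero_bounded[OF exp_zero[OF assms(4)], where B=1]) (use Phi_ge0 Phi_le1 in auto)
  have q4': "((\<lambda>x. S * exp (- q * x) * D) \<longlongrightarrow> 0) at_top"
    using tendsto_mult_left_zero[OF exp_zero[OF assms(4)]] .
  have q4: "((\<lambda>x. S * exp (- q * x) * D * (Phi (?z4 x) - Phi (?z2 x))) \<longlongrightarrow> 0) at_top"
    by (rule zero_bounded[OF q4', where B=1])
      (smt (verit) Phi_ge0 Phi_le1)
  define L where "L = K * 1 * 1 - 0 - b * 1 * 1 + 0 + (1 / \<theta>) * (b * 1 * 1 - 0 - K * 1 * C * 1)"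
  have lim: "((\<lambda>x. K * exp (- 0 * x) * Phi (- ?z1 x + ?s x) - S * exp (- q * x) * Phi (- ?z1 x)
        - b * exp (- 0 * x) * Phi (- ?z3 x + ?s x) + S * exp (- q * x) * Phi (- ?z3 x)
        + (1 / \<theta>) * (b * exp (- 0 * x) * Phi (- ?z3 x + ?s x)
            - S * exp (- q * x) * D * (Phi (?z4 x) - Phi (?z2 x))
            - K * exp (- 0 * x) * C * Phi (?z2 x - \<theta> * ?s x))) \<longlongrightarrow> L) at_top"
    unfolding L_def
    by (intro tendsto_intros l1 l3 l5 q1 q3 q4) auto
  have rlim: "((\<lambda>x. K * exp (- 0 * x) - S * exp (- q * x)) \<longlongrightarrow> K - 0) at_top"
    by (intro tendsto_intros exp_zero[OF assms(4)]) simp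
  have LK: "L < K"
  proof -
    have Kb: "K / b \<ge> 1" using assms by simp
    have KC: "K * C = b * (K / b) powr \<theta>"
    proof -
      have "(K / b) powr \<theta> = (K / b) powr (1 + (\<theta> - 1))" by simp
      also have "\<dots> = (K / b) powr 1 * (K / b) powr (\<theta> - 1)" by (rule powr_add)
      also have "\<dots> = (K / b) * C" unfolding C_def using Kb assms by simp
      finally show ?thesis using assms by simp
    qed
    have "(K / b) powr \<theta> \<le> 1" using powr_mono[of \<theta> 0 "K / b"] Kb thneg assms by (simp split: if_splits)
    then have "b - K * C \<ge> 0" using KC assms by (simp add: mult_le_cancel_left1)
    then have "(1 / \<theta>) * (b - K * C) \<le> 0" using thneg
      by (simp add: divide_nonneg_neg)
    then show ?thesis unfolding L_def using assms by simp
  qed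
  have ev: "eventually (\<lambda>x. nneg_price b \<sigma> r q K (x + t) t S
            < K * exp (- r * (x + t - t)) - S * exp (- q * (x + t - t))) at_top"
  proof -
    have "eventually (\<lambda>x. (K * exp (- 0 * x) * Phi (- ?z1 x + ?s x) - S * exp (- q * x) * Phi (- ?z1 x)
        - b * exp (- 0 * x) * Phi (- ?z3 x + ?s x) + S * exp (- q * x) * Phi (- ?z3 x)
        + (1 / \<theta>) * (b * exp (- 0 * x) * Phi (- ?z3 x + ?s x)
            - S * exp (- q * x) * D * (Phi (?z4 x) - Phi (?z2 x))
            - K * exp (- 0 * x) * C * Phi (?z2 x - \<theta> * ?s x)))
         - (K * exp (- 0 * x) - S * exp (- q * x)) < 0) at_top"
      by (rule order_tendstoD(2)[OF tendsto_diff[OF lim rlim]]) (use LK in simp)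
    then show ?thesis
    proof eventually_elim
      case (elim x)
      have "nneg_price b \<sigma> r q K (x + t) t S = K * exp (- 0 * x) * Phi (- ?z1 x + ?s x) - S * exp (- q * x) * Phi (- ?z1 x)
        - b * exp (- 0 * x) * Phi (- ?z3 x + ?s x) + S * exp (- q * x) * Phi (- ?z3 x)
        + (1 / \<theta>) * (b * exp (- 0 * x) * Phi (- ?z3 x + ?s x)
            - S * exp (- q * x) * D * (Phi (?z4 x) - Phi (?z2 x))
            - K * exp (- 0 * x) * C * Phi (?z2 x - \<theta> * ?s x))"
        by (simp only: nneg_price_def Let_def assms(3) add_diff_cancel_right' flip: \<theta>_def c_def C_def D_def)
      moreover have "K * exp (- r * (x + t - t)) - S * exp (- q * (x + t - t)) = K * exp (- 0 * x) - S * exp (- q * x)"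
        by (simp only: assms(3) add_diff_cancel_right')
      ultimately show ?case using elim by linarith
    qed
  qed
  then obtain N where N: "\<And>x. x \<ge> N \<Longrightarrow> nneg_price b \<sigma> r q K (x + t) t S
            < K * exp (- r * (x + t - t)) - S * exp (- q * (x + t - t))"
    by (auto simp: eventually_at_top_linorder)
  show ?thesis
  proof (intro exI[of _ "t + max N 1"] conjI allI impI)
    show "t < t + max N 1" by simp
    fix T assume "t + max N 1 < T"
    then have "T - t \<ge> N" by simp
    from N[OF this] show "nneg_price b \<sigma> r q K T t S < K * exp (- r * (T - t)) - S * exp (- q * (T - t))"
      by simp
  qed
qed

end
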